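(* Let $R$ be a ring, $S$ an $R$-algebra, and $\omega_{S/R}\colon R[[t]]\otimes_RS\to S[[t]]$ the natural map. The image of $\omega_{S/R}$ is the subring of series $\sum_ns_nt^n\in S[[t]]$ for which there exists a finitely generated $R$-submodule $M\subseteq S$ with $s_n\in M$ for all $n\in\mathbb{N}$. If every finitely generated $R$-submodule of $S$ is contained in a finitely presented $R$-submodule of $S$, then $\omega_{S/R}$ is injective. *)

theory Defs
  imports "HOL-Computational_Algebra.Formal_Power_Series" "HOL-Library.Poly_Mapping"
begin

text \<open>R is a commutative ring (type 'a), S is an R-algebra given by a ring homomorphism
  phi : R -> S (type 'b). The R-module structure on S is r . s = phi r * s,
  on R[[t]] it is r . f = fps_const r * f.\<close>

definition alg_hom :: "('a::comm_ring_1 \<Rightarrow> 'b::comm_ring_1) \<Rightarrow> bool" where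
  "alg_hom phi \<longleftrightarrow> phi 1 = 1 \<and> (\<forall>x y. phi (x + y) = phi x + phi y) \<and>
                      (\<forall>x y. phi (x * y) = phi x * phi y)"

definition fps_map :: "('a \<Rightarrow> 'b) \<Rightarrow> 'a fps \<Rightarrow> 'b fps" where
  "fps_map phi f = Abs_fps (\<lambda>n. phi (fps_nth f n))"

text \<open>Tensor product R[[t]] (x)_R S: the free abelian group on pairs (f, s),
  modulo the subgroup generated by the bilinearity / balancing relations.\<close>

definition tensor_rels :: "('a::comm_ring_1 \<Rightarrow> 'b::comm_ring_1) \<Rightarrow> ('a fps \<times> 'b \<Rightarrow>\<^sub>0 int) set" where
  "tensor_rels phi =
     {Poly_Mapping.single (f + g, s) 1 - Poly_Mapping.single (f, s) 1 - Poly_Mapping.single (g, s) 1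
        | f g s. True}
   \<union> {Poly_Mapping.single (f, s + s') 1 - Poly_Mapping.single (f, s) 1 - Poly_Mapping.single (f, s') 1
        | f s s'. True}
   \<union> {Poly_Mapping.single (fps_const r * f, s) 1 - Poly_Mapping.single (f, phi r * s) 1
        | r f s. True}"

inductive_set tensor_null :: "('a::comm_ring_1 \<Rightarrow> 'b::comm_ring_1) \<Rightarrow> ('a fps \<times> 'b \<Rightarrow>\<^sub>0 int) set"
  for phi where
  zero: "0 \<in> tensor_null phi"
| rel: "x \<in> tensor_rels phi \<Longrightarrow> x \<in> tensor_null phi"
| diff: "x \<in> tensor_null phi \<Longrightarrow> y \<in> tensor_null phi \<Longrightarrow> x - y \<in> tensor_null phi"

definition tensor_space :: "('a::comm_ring_1 \<Rightarrow> 'b::comm_ring_1) \<Rightarrow> ('a fps \<times> 'b \<Rightarrow>\<^sub>0 int) set set" where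
  "tensor_space phi = range (\<lambda>x. {y. x - y \<in> tensor_null phi})"

definition omega_free :: "('a::comm_ring_1 \<Rightarrow> 'b::comm_ring_1) \<Rightarrow> ('a fps \<times> 'b \<Rightarrow>\<^sub>0 int) \<Rightarrow> 'b fps" where
  "omega_free phi x =
     (\<Sum>p\<in>Poly_Mapping.keys x. of_int (Poly_Mapping.lookup x p) * fps_map phi (fst p) * fps_const (snd p))"

definition omega :: "('a::comm_ring_1 \<Rightarrow> 'b::comm_ring_1) \<Rightarrow> ('a fps \<times> 'b \<Rightarrow>\<^sub>0 int) set \<Rightarrow> 'b fps" where
  "omega phi X = omega_free phi (SOME x. x \<in> X)"

definition fg_submodule :: "('a::comm_ring_1 \<Rightarrow> 'b::comm_ring_1) \<Rightarrow> 'b set \<Rightarrow> bool" where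
  "fg_submodule phi M \<longleftrightarrow>
     (\<exists>(n::nat) gs. M = {(\<Sum>i<n. phi (c i) * gs i) | c. True})"

text \<open>Finitely presented R-submodule of S: generated by gs_0..gs_(n-1) such that the
  module of relations in R^n (vectors c with c i = 0 for i >= n) is finitely generated.\<close>
definition fp_submodule :: "('a::comm_ring_1 \<Rightarrow> 'b::comm_ring_1) \<Rightarrow> 'b set \<Rightarrow> bool" where
  "fp_submodule phi M \<longleftrightarrow>
     (\<exists>(n::nat) gs. M = {(\<Sum>i<n. phi (c i) * gs i) | c. True} \<and>
        (\<exists>(m::nat) rels. (\<forall>j<m. \<forall>i\<ge>n. rels j i = 0) \<and>
           {c. (\<forall>i\<ge>n. c i = 0) \<and> (\<Sum>i<n. phi (c i) * gs i) = 0}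
             = {(\<lambda>i. \<Sum>j<m. a j * rels j i) | a. True}))"

end

theory Submission
  imports Defs
begin

context
  fixes phi :: "'a::comm_ring_1 \<Rightarrow> 'b::comm_ring_1"
  assumes ah: "alg_hom phi"
begin

lemma ph_add: "phi (x + y) = phi x + phi y" using ah by (simp add: alg_hom_def)
lemma ph_mult: "phi (x * y) = phi x * phi y" using ah by (simp add: alg_hom_def)
lemma ph_one: "phi 1 = 1" using ah by (simp add: alg_hom_def)
lemma ph_zero: "phi 0 = 0"
proof -
  have "phi (0 + 0) = phi 0 + phi 0" by (rule ph_add)
  then show ?thesis by simp
qed
lemma ph_uminus: "phi (- x) = - phi x"
proof -
  have "phi (x + - x) = phi x + phi (- x)" by (rule ph_add)
  then show ?thesis by (simp add: ph_zero add_eq_0_iff)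
qed
lemma ph_sum: "phi (sum g A) = sum (\<lambda>i. phi (g i)) A"
  by (induction A rule: infinite_finite_induct) (auto simp: ph_zero ph_add)
lemma ph_of_nat: "phi (of_nat n) = of_nat n"
  by (induction n) (auto simp: ph_zero ph_add ph_one)
lemma ph_of_int: "phi (of_int c) = of_int c"
  by (cases c rule: int_cases2) (auto simp: ph_of_nat ph_uminus)

lemma fm_nth [simp]: "fps_nth (fps_map phi f) n = phi (fps_nth f n)"
  by (simp add: fps_map_def)
lemma fm_add: "fps_map phi (f + g) = fps_map phi f + fps_map phi g"
  by (rule fps_ext) (simp add: ph_add)
lemma fm_const_mult: "fps_map phi (fps_const r * f) = fps_const (phi r) * fps_map phi f"
  by (rule fps_ext) (simp add: ph_mult)
lemma fm_of_int_mult: "fps_map phi (fps_const (of_int c) * f) = fps_const (of_int c) * fps_map phi f"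
  by (subst fm_const_mult) (simp add: ph_of_int)

end


definition tm :: "'a::comm_ring_1 fps \<Rightarrow> 'b::comm_ring_1 \<Rightarrow> ('a fps \<times> 'b \<Rightarrow>\<^sub>0 int)" where
  "tm f s = Poly_Mapping.single (f, s) 1"

definition teq :: "('a::comm_ring_1 \<Rightarrow> 'b::comm_ring_1) \<Rightarrow> ('a fps \<times> 'b \<Rightarrow>\<^sub>0 int) \<Rightarrow> ('a fps \<times> 'b \<Rightarrow>\<^sub>0 int) \<Rightarrow> bool" where
  "teq phi x y \<longleftrightarrow> x - y \<in> tensor_null phi"

lemma tn_uminus: "x \<in> tensor_null phi \<Longrightarrow> - x \<in> tensor_null phi"
  using tensor_null.diff[OF tensor_null.zero, of x] by simp

lemma tn_add: "x \<in> tensor_null phi \<Longrightarrow> y \<in> tensor_null phi \<Longrightarrow> x + y \<in> tensor_null phi"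
  using tensor_null.diff[of x phi "- y"] tn_uminus[of y phi] by simp

lemma tn_sum: "(\<And>i. i \<in> A \<Longrightarrow> g i \<in> tensor_null phi) \<Longrightarrow> sum g A \<in> tensor_null phi"
  by (induction A rule: infinite_finite_induct) (auto intro: tensor_null.zero tn_add)

lemma teq_refl: "teq phi x x"
  by (simp add: teq_def tensor_null.zero)

lemma teq_sym: "teq phi x y \<Longrightarrow> teq phi y x"
  unfolding teq_def using tn_uminus[of "x - y" phi] by simp

lemma teq_trans [trans]: "teq phi x y \<Longrightarrow> teq phi y z \<Longrightarrow> teq phi x z"
  unfolding teq_def using tn_add[of "x - y" phi "y - z"] by simp

lemma teq_add: "teq phi a b \<Longrightarrow> teq phi c d \<Longrightarrow> teq phi (a + c) (b + d)"
  unfolding teq_def using tn_add[of "a - b" phi "c - d"] by (simp add: algebra_simps)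

lemma teq_uminus: "teq phi a b \<Longrightarrow> teq phi (- a) (- b)"
  unfolding teq_def using tn_uminus[of "a - b" phi] by (simp add: algebra_simps)

lemma teq_sum: "(\<And>i. i \<in> A \<Longrightarrow> teq phi (f i) (g i)) \<Longrightarrow> teq phi (sum f A) (sum g A)"
  unfolding teq_def using tn_sum[of A "\<lambda>i. f i - g i" phi] by (simp add: sum_subtractf)

lemma teq_zero_iff: "teq phi x 0 \<longleftrightarrow> x \<in> tensor_null phi"
  by (simp add: teq_def)

lemma tm_addL: "teq phi (tm (f + g) s) (tm f s + tm g s)"
proof -
  have "tm (f + g) s - tm f s - tm g s \<in> tensor_rels phi"
    unfolding tensor_rels_def tm_def by blast
  then show ?thesis unfolding teq_def by (simp add: tensor_null.rel diff_diff_eq)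
qed

lemma tm_addR: "teq phi (tm f (s + s')) (tm f s + tm f s')"
proof -
  have "tm f (s + s') - tm f s - tm f s' \<in> tensor_rels phi"
    unfolding tensor_rels_def tm_def by blast
  then show ?thesis unfolding teq_def by (simp add: tensor_null.rel diff_diff_eq)
qed

lemma tm_scal: "teq phi (tm (fps_const r * f) s) (tm f (phi r * s))"
proof -
  have "tm (fps_const r * f) s - tm f (phi r * s) \<in> tensor_rels phi"
    unfolding tensor_rels_def tm_def by blast
  then show ?thesis unfolding teq_def by (simp add: tensor_null.rel)
qed

lemma tm_zeroL: "teq phi (tm 0 s) 0"
proof -
  have "teq phi (tm (0 + 0) s) (tm 0 s + tm 0 s)" by (rule tm_addL)
  then have "- tm 0 s \<in> tensor_null phi" by (simp add: teq_def)
  then show ?thesis using tn_uminus[of "- tm 0 s" phi] by (simp add: teq_def)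
qed

lemma tm_zeroR: "teq phi (tm f 0) 0"
proof -
  have "teq phi (tm f (0 + 0)) (tm f 0 + tm f 0)" by (rule tm_addR)
  then have "- tm f 0 \<in> tensor_null phi" by (simp add: teq_def)
  then show ?thesis using tn_uminus[of "- tm f 0" phi] by (simp add: teq_def)
qed

lemma tm_sumL: "teq phi (tm (sum f A) s) (\<Sum>i\<in>A. tm (f i) s)"
proof (induction A rule: infinite_finite_induct)
  case (infinite A) then show ?case by (simp add: tm_zeroL)
next
  case empty then show ?case by (simp add: tm_zeroL)
next
  case (insert x F)
  have "teq phi (tm (sum f (insert x F)) s) (tm (f x + sum f F) s)"
    using insert by (simp add: teq_refl)
  also have "teq phi \<dots> (tm (f x) s + tm (sum f F) s)" by (rule tm_addL)
  also have "teq phi \<dots> (tm (f x) s + (\<Sum>i\<in>F. tm (f i) s))"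
    by (rule teq_add[OF teq_refl insert.IH])
  also have "\<dots> = (\<Sum>i\<in>insert x F. tm (f i) s)" using insert by simp
  finally show ?case .
qed

lemma tm_sumR: "teq phi (tm f (sum g A)) (\<Sum>i\<in>A. tm f (g i))"
proof (induction A rule: infinite_finite_induct)
  case (infinite A) then show ?case by (simp add: tm_zeroR)
next
  case empty then show ?case by (simp add: tm_zeroR)
next
  case (insert x F)
  have "teq phi (tm f (sum g (insert x F))) (tm f (g x + sum g F))"
    using insert by (simp add: teq_refl)
  also have "teq phi \<dots> (tm f (g x) + tm f (sum g F))" by (rule tm_addR)
  also have "teq phi \<dots> (tm f (g x) + (\<Sum>i\<in>F. tm f (g i)))"
    by (rule teq_add[OF teq_refl insert.IH])
  also have "\<dots> = (\<Sum>i\<in>insert x F. tm f (g i))" using insert by simp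
  finally show ?case .
qed

lemma tm_uminusL: "teq phi (tm (- f) s) (- tm f s)"
proof -
  have a: "teq phi (tm (f + - f) s) (tm f s + tm (- f) s)" by (rule tm_addL)
  have b: "teq phi (tm (f + - f) s) 0" using tm_zeroL by simp
  have "(tm f s + tm (- f) s - tm (f + - f) s) + (tm (f + - f) s - 0) \<in> tensor_null phi"
    using teq_sym[OF a] b by (intro tn_add) (simp_all add: teq_def)
  then show ?thesis by (simp add: teq_def algebra_simps)
qed

lemma teq_int: "teq phi (Poly_Mapping.single (f, s) c) (tm (fps_const (of_int c) * f) s)"
proof -
  have nat: "teq phi (Poly_Mapping.single (f, s) (int n)) (tm (fps_const (of_nat n) * f) s)" for n
  proof (induction n)
    case 0 then show ?case using tm_zeroL[of phi s] by (simp add: teq_sym)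
  next
    case (Suc n)
    have "Poly_Mapping.single (f, s) (int (Suc n)) = Poly_Mapping.single (f, s) (int n) + tm f s"
      by (simp add: tm_def single_add[symmetric] add.commute)
    also have "teq phi \<dots> (tm (fps_const (of_nat n) * f) s + tm f s)"
      by (rule teq_add[OF Suc.IH teq_refl])
    also have "teq phi \<dots> (tm (fps_const (of_nat n) * f + f) s)"
      by (rule teq_sym[OF tm_addL])
    also have "fps_const (of_nat n) * f + f = fps_const (of_nat (Suc n)) * f"
      by (simp add: algebra_simps fps_const_add[symmetric])
    finally show ?case .
  qed
  show ?thesis
  proof (cases c rule: int_cases2)
    case (nonneg n) then show ?thesis using nat[of n] by simp
  next
    case (nonpos n)
    have "Poly_Mapping.single (f, s) c = - Poly_Mapping.single (f, s) (int n)"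
      unfolding nonpos by (rule single_uminus)
    also have "teq phi \<dots> (- tm (fps_const (of_nat n) * f) s)"
      by (rule teq_uminus[OF nat])
    also have "teq phi \<dots> (tm (- (fps_const (of_nat n) * f)) s)"
      by (rule teq_sym[OF tm_uminusL])
    also have "- (fps_const (of_nat n) * f) = fps_const (of_int c) * f"
      using nonpos by (simp add: fps_const_neg[symmetric] del: fps_const_neg)
    finally show ?thesis .
  qed
qed

lemma pm_decomp: "x = (\<Sum>p\<in>Poly_Mapping.keys x. Poly_Mapping.single p (Poly_Mapping.lookup x p))"
  by (rule poly_mapping_eqI) (simp add: lookup_sum lookup_single when_def in_keys_iff)


context
  fixes phi :: "'a::comm_ring_1 \<Rightarrow> 'b::comm_ring_1"
  assumes ah: "alg_hom phi"
begin

lemma of_superset: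
  assumes "finite S" "Poly_Mapping.keys x \<subseteq> S"
  shows "omega_free phi x = (\<Sum>p\<in>S. of_int (Poly_Mapping.lookup x p) * fps_map phi (fst p) * fps_const (snd p))"
  unfolding omega_free_def
  by (rule sum.mono_neutral_left) (use assms in \<open>auto simp: in_keys_iff\<close>)

lemma of_add: "omega_free phi (x + y) = omega_free phi x + omega_free phi y"
proof -
  let ?S = "Poly_Mapping.keys x \<union> Poly_Mapping.keys y"
  have f: "finite ?S" by simp
  show ?thesis
    using keys_add[of x y]
    by (simp add: of_superset[OF f] lookup_add distrib_right sum.distrib)
qed

lemma of_zero: "omega_free phi 0 = 0"
  by (simp add: omega_free_def)

lemma of_uminus: "omega_free phi (- x) = - omega_free phi x"
  using of_add[of x "- x"] by (simp add: of_zero add_eq_0_iff)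

lemma of_diff: "omega_free phi (x - y) = omega_free phi x - omega_free phi y"
  using of_add[of x "- y"] by (simp add: of_uminus)

lemma of_single: "omega_free phi (Poly_Mapping.single p c) = of_int c * fps_map phi (fst p) * fps_const (snd p)"
  by (subst of_superset[of "{p}"]) (auto simp: lookup_single)

lemma of_tm: "omega_free phi (tm f s) = fps_map phi f * fps_const s"
  by (simp add: tm_def of_single)

lemma of_sum: "omega_free phi (sum g A) = (\<Sum>i\<in>A. omega_free phi (g i))"
  by (induction A rule: infinite_finite_induct) (auto simp: of_zero of_add)

lemma of_null: "x \<in> tensor_null phi \<Longrightarrow> omega_free phi x = 0"
proof (induction rule: tensor_null.induct)
  case zero then show ?case by (simp add: of_zero)
next
  case (rel x)
  from rel.hyps consider
      (a) f g s where "x = tm (f + g) s - tm f s - tm g s"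
    | (b) f s s' where "x = tm f (s + s') - tm f s - tm f s'"
    | (c) r f s where "x = tm (fps_const r * f) s - tm f (phi r * s)"
    unfolding tensor_rels_def tm_def by blast
  then show ?case
  proof cases
    case a show ?thesis unfolding a of_diff of_tm
      by (intro fps_ext) (simp add: fm_nth[OF ah] ph_add[OF ah] algebra_simps)
  next
    case b show ?thesis unfolding b of_diff of_tm
      by (intro fps_ext) (simp add: fm_nth[OF ah] ph_add[OF ah] algebra_simps)
  next
    case c show ?thesis unfolding c of_diff of_tm
      by (intro fps_ext) (simp add: fm_nth[OF ah] ph_mult[OF ah] algebra_simps)
  qed
next
  case (diff x y) then show ?case by (simp add: of_diff)
qed

lemma of_teq: "teq phi x y \<Longrightarrow> omega_free phi x = omega_free phi y"
  unfolding teq_def using of_null[of "x - y"] by (simp add: of_diff)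

lemma of_tmsum: "omega_free phi (\<Sum>k<m. tm (F k) (s k)) = (\<Sum>k<m. fps_map phi (F k) * fps_const (s k))"
  by (simp add: of_sum of_tm)

lemma omega_class: "omega phi {y. x - y \<in> tensor_null phi} = omega_free phi x"
proof -
  let ?X = "{y. x - y \<in> tensor_null phi}"
  have "x \<in> ?X" by (simp add: tensor_null.zero)
  then have "(SOME y. y \<in> ?X) \<in> ?X" by (rule someI)
  then have "teq phi x (SOME y. y \<in> ?X)" by (simp add: teq_def)
  then show ?thesis unfolding omega_def by (simp add: of_teq)
qed

lemma main_null:
  fixes F :: "nat \<Rightarrow> 'a fps" and s :: "nat \<Rightarrow> 'b" and m :: nat
  assumes hyp: "\<forall>M. fg_submodule phi M \<longrightarrow> (\<exists>N. fp_submodule phi N \<and> M \<subseteq> N)"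
    and hyp0: "(\<Sum>k<m. fps_map phi (F k) * fps_const (s k)) = 0"
  shows "(\<Sum>k<m. tm (F k) (s k)) \<in> tensor_null phi"
proof -
  let ?M = "{(\<Sum>i<m. phi (c i) * s i) | c. True}"
  have "fg_submodule phi ?M" unfolding fg_submodule_def by (rule exI[of _ m], rule exI[of _ s], rule refl)
  then obtain N where fpN: "fp_submodule phi N" and MN: "?M \<subseteq> N" using hyp by blast
  from fpN obtain n gs mm rels where Neq: "N = {(\<Sum>i<(n::nat). phi (c i) * gs i) | c. True}"
     and releq: "{c. (\<forall>i\<ge>n. c i = 0) \<and> (\<Sum>i<n. phi (c i) * gs i) = 0}
             = {(\<lambda>i. \<Sum>j<(mm::nat). a j * rels j i) | a. True}"
     unfolding fp_submodule_def by blast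
  have sM: "s k \<in> ?M" if "k < m" for k
  proof -
    have "phi (if i = k then 1 else 0) * s i = (if i = k then s i else 0)" for i
      by (simp add: ph_one[OF ah] ph_zero[OF ah])
    then have "(\<Sum>i<m. phi (if i = k then 1 else 0) * s i) = s k"
      using that by simp
    then show ?thesis by (intro CollectI exI[of _ "\<lambda>i. if i = k then 1 else 0"]) simp
  qed
  have "\<forall>k. \<exists>c. k < m \<longrightarrow> s k = (\<Sum>i<n. phi (c i) * gs i)"
  proof
    fix k
    show "\<exists>c. k < m \<longrightarrow> s k = (\<Sum>i<n. phi (c i) * gs i)"
    proof (cases "k < m")
      case True
      then have "s k \<in> N" using sM MN by (rule_tac subsetD) auto
      then have "\<exists>c. s k = (\<Sum>i<n. phi (c i) * gs i) \<and> True" unfolding Neq by (rule CollectD)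
      then show ?thesis by simp
    qed simp
  qed
  from choice[OF this] obtain a where a0: "\<forall>k. k < m \<longrightarrow> s k = (\<Sum>i<n. phi (a k i) * gs i)" ..
  have a: "s k = (\<Sum>i<n. phi (a k i) * gs i)" if "k < m" for k using a0 that by simp
  define H where "H i = (\<Sum>k<m. fps_const (a k i) * F k)" for i
  have stepA: "teq phi (\<Sum>k<m. tm (F k) (s k)) (\<Sum>i<n. tm (H i) (gs i))"
  proof -
    have "teq phi (\<Sum>k<m. tm (F k) (s k)) (\<Sum>k<m. \<Sum>i<n. tm (fps_const (a k i) * F k) (gs i))"
    proof (rule teq_sum)
      fix k assume "k \<in> {..<m}"
      then have "tm (F k) (s k) = tm (F k) (\<Sum>i<n. phi (a k i) * gs i)" using a by simp
      also have "teq phi \<dots> (\<Sum>i<n. tm (F k) (phi (a k i) * gs i))" by (rule tm_sumR)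
      also have "teq phi \<dots> (\<Sum>i<n. tm (fps_const (a k i) * F k) (gs i))"
        by (rule teq_sum, rule teq_sym, rule tm_scal)
      finally show "teq phi (tm (F k) (s k)) (\<Sum>i<n. tm (fps_const (a k i) * F k) (gs i))" .
    qed
    also have "(\<Sum>k<m. \<Sum>i<n. tm (fps_const (a k i) * F k) (gs i))
             = (\<Sum>i<n. \<Sum>k<m. tm (fps_const (a k i) * F k) (gs i))" by (rule sum.swap)
    also have "teq phi \<dots> (\<Sum>i<n. tm (H i) (gs i))"
      unfolding H_def by (rule teq_sum, rule teq_sym, rule tm_sumL)
    finally show ?thesis .
  qed
  have om0: "(\<Sum>i<n. fps_map phi (H i) * fps_const (gs i)) = 0"
    using of_teq[OF stepA] hyp0 by (simp add: of_tmsum)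
  have "\<forall>k. \<exists>b. (\<lambda>i. if i < n then fps_nth (H i) k else 0) = (\<lambda>i. \<Sum>j<mm. b j * rels j i)"
  proof
    fix k
    have "(\<Sum>i<n. phi (fps_nth (H i) k) * gs i) = fps_nth (\<Sum>i<n. fps_map phi (H i) * fps_const (gs i)) k"
      by (simp add: fps_sum_nth fm_nth[OF ah])
    then have "(\<Sum>i<n. phi (fps_nth (H i) k) * gs i) = 0" using om0 by simp
    then have "(\<lambda>i. if i < n then fps_nth (H i) k else 0)
        \<in> {c. (\<forall>i\<ge>n. c i = 0) \<and> (\<Sum>i<n. phi (c i) * gs i) = 0}" by simp
    then have "(\<lambda>i. if i < n then fps_nth (H i) k else 0) \<in> {(\<lambda>i. \<Sum>j<mm. a j * rels j i) | a. True}"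
      by (simp only: releq)
    then have "\<exists>b. (\<lambda>i. if i < n then fps_nth (H i) k else 0) = (\<lambda>i. \<Sum>j<mm. b j * rels j i) \<and> True"
      by (rule CollectD)
    then show "\<exists>b. (\<lambda>i. if i < n then fps_nth (H i) k else 0) = (\<lambda>i. \<Sum>j<mm. b j * rels j i)"
      by simp
  qed
  from choice[OF this] obtain b where b0: "\<forall>k. (\<lambda>i. if i < n then fps_nth (H i) k else 0) = (\<lambda>i. \<Sum>j<mm. b k j * rels j i)" ..
  have b: "(\<lambda>i. if i < n then fps_nth (H i) k else 0) = (\<lambda>i. \<Sum>j<mm. b k j * rels j i)" for k
    using b0 by simp
  define A where "A j = Abs_fps (\<lambda>k. b k j)" for j
  have H_eq: "H i = (\<Sum>j<mm. fps_const (rels j i) * A j)" if "i < n" for i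
  proof (rule fps_ext)
    fix k
    have "fps_nth (H i) k = (\<Sum>j<mm. b k j * rels j i)" using fun_cong[OF b[of k], of i] that by simp
    then show "fps_nth (H i) k = fps_nth (\<Sum>j<mm. fps_const (rels j i) * A j) k"
      by (simp add: fps_sum_nth A_def mult.commute)
  qed
  have relsum: "(\<Sum>i<n. phi (rels j i) * gs i) = 0" if "j < mm" for j
  proof -
    have pt: "(if j' = j then 1 else 0) * rels j' i = (if j' = j then rels j' i else 0)" for j' i
      by simp
    have "(\<lambda>i. \<Sum>j'<mm. (if j' = j then 1 else 0) * rels j' i) = rels j"
      using that by (simp only: pt) simp
    then have "rels j \<in> {(\<lambda>i. \<Sum>j<mm. a j * rels j i) | a. True}"
      by (intro CollectI exI[of _ "\<lambda>j'. if j' = j then 1 else 0"]) simp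
    then have "rels j \<in> {c. (\<forall>i\<ge>n. c i = 0) \<and> (\<Sum>i<n. phi (c i) * gs i) = 0}"
      using releq by simp
    then show ?thesis by simp
  qed
  have stepC: "teq phi (\<Sum>i<n. tm (H i) (gs i)) 0"
  proof -
    have "(\<Sum>i<n. tm (H i) (gs i)) = (\<Sum>i<n. tm (\<Sum>j<mm. fps_const (rels j i) * A j) (gs i))"
      using H_eq by simp
    also have "teq phi \<dots> (\<Sum>i<n. \<Sum>j<mm. tm (fps_const (rels j i) * A j) (gs i))"
      by (rule teq_sum, rule tm_sumL)
    also have "teq phi \<dots> (\<Sum>i<n. \<Sum>j<mm. tm (A j) (phi (rels j i) * gs i))"
      by (rule teq_sum, rule teq_sum, rule tm_scal)
    also have "\<dots> = (\<Sum>j<mm. \<Sum>i<n. tm (A j) (phi (rels j i) * gs i))" by (rule sum.swap)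
    also have "teq phi \<dots> (\<Sum>j<mm. tm (A j) (\<Sum>i<n. phi (rels j i) * gs i))"
      by (rule teq_sum, rule teq_sym, rule tm_sumR)
    also have "\<dots> = (\<Sum>j<mm. tm (A j) 0)" using relsum by simp
    also have "teq phi \<dots> (\<Sum>j<mm. 0)" by (rule teq_sum, rule tm_zeroR)
    finally show ?thesis by simp
  qed
  from teq_trans[OF stepA stepC] show ?thesis by (simp add: teq_def)
qed

end

lemma decomp:
  fixes phi :: "'a::comm_ring_1 \<Rightarrow> 'b::comm_ring_1" and x :: "'a fps \<times> 'b \<Rightarrow>\<^sub>0 int"
  shows "\<exists>(m::nat) F s. teq phi x (\<Sum>k<m. tm (F k) (s k))"
proof -
  let ?K = "Poly_Mapping.keys x"
  define G where "G p = fps_const (of_int (Poly_Mapping.lookup x p)) * fst p" for p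
  obtain h where h: "bij_betw h {0..<card ?K} ?K" using ex_bij_betw_nat_finite[OF finite_keys] by blast
  have "x = (\<Sum>p\<in>?K. Poly_Mapping.single p (Poly_Mapping.lookup x p))" by (rule pm_decomp)
  also have "teq phi \<dots> (\<Sum>p\<in>?K. tm (G p) (snd p))"
  proof (rule teq_sum)
    fix p assume "p \<in> ?K"
    show "teq phi (Poly_Mapping.single p (Poly_Mapping.lookup x p)) (tm (G p) (snd p))"
      using teq_int[of phi "fst p" "snd p" "Poly_Mapping.lookup x p"] by (simp add: G_def)
  qed
  also have "\<dots> = (\<Sum>k\<in>{0..<card ?K}. tm (G (h k)) (snd (h k)))"
    by (rule sum.reindex_bij_betw[OF h, symmetric])
  also have "\<dots> = (\<Sum>k<card ?K. tm (G (h k)) (snd (h k)))" by (simp add: atLeast0LessThan)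
  finally show ?thesis by (intro exI)
qed

theorem lemma2p4:
  fixes phi :: "'a::comm_ring_1 \<Rightarrow> 'b::comm_ring_1"
  assumes "alg_hom phi"
  shows "omega phi ` tensor_space phi =
           {F. \<exists>M. fg_submodule phi M \<and> (\<forall>n. fps_nth F n \<in> M)}
         \<and> ((\<forall>M. fg_submodule phi M \<longrightarrow> (\<exists>N. fp_submodule phi N \<and> M \<subseteq> N))
              \<longrightarrow> inj_on (omega phi) (tensor_space phi))"
proof (intro conjI impI equalityI)
  note ah = assms
  show "omega phi ` tensor_space phi \<subseteq> {F. \<exists>M. fg_submodule phi M \<and> (\<forall>n. fps_nth F n \<in> M)}"
  proof
    fix G assume "G \<in> omega phi ` tensor_space phi"
    then obtain x where G: "G = omega phi {y. x - y \<in> tensor_null phi}"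
      unfolding tensor_space_def by blast
    obtain m :: nat and F s where mFs: "teq phi x (\<Sum>k<m. tm (F k) (s k))" using decomp by blast
    have "G = (\<Sum>k<m. fps_map phi (F k) * fps_const (s k))"
      using G omega_class[OF ah] of_teq[OF ah mFs] by (simp add: of_tmsum[OF ah])
    then have "fps_nth G n = (\<Sum>k<m. phi (fps_nth (F k) n) * s k)" for n
      by (simp add: fps_sum_nth fm_nth[OF ah])
    moreover have "fg_submodule phi {(\<Sum>i<m. phi (c i) * s i) | c. True}"
      unfolding fg_submodule_def by (rule exI[of _ m], rule exI[of _ s], rule refl)
    moreover have "\<forall>n. fps_nth G n \<in> {(\<Sum>i<m. phi (c i) * s i) | c. True}"
    proof
      fix n
      show "fps_nth G n \<in> {(\<Sum>i<m. phi (c i) * s i) | c. True}"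
        by (rule CollectI, rule exI[of _ "\<lambda>k. fps_nth (F k) n"]) (simp add: calculation(1))
    qed
    ultimately have "fg_submodule phi {(\<Sum>i<m. phi (c i) * s i) | c. True} \<and>
        (\<forall>n. fps_nth G n \<in> {(\<Sum>i<m. phi (c i) * s i) | c. True})"
      by blast
    then show "G \<in> {F. \<exists>M. fg_submodule phi M \<and> (\<forall>n. fps_nth F n \<in> M)}"
      by blast
  qed
next
  note ah = assms
  show "{F. \<exists>M. fg_submodule phi M \<and> (\<forall>n. fps_nth F n \<in> M)} \<subseteq> omega phi ` tensor_space phi"
  proof
    fix G assume "G \<in> {F. \<exists>M. fg_submodule phi M \<and> (\<forall>n. fps_nth F n \<in> M)}"
    then obtain n :: nat and gs where "\<forall>k. fps_nth G k \<in> {(\<Sum>i<n. phi (c i) * gs i) | c. True}"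
      unfolding fg_submodule_def by blast
    then have "\<forall>k. \<exists>c. fps_nth G k = (\<Sum>i<n. phi (c i) * gs i)" by blast
    then obtain c where c: "\<And>k. fps_nth G k = (\<Sum>i<n. phi (c k i) * gs i)" by metis
    define H where "H i = Abs_fps (\<lambda>k. c k i)" for i
    let ?x = "\<Sum>i<n. tm (H i) (gs i)"
    have "omega phi {y. ?x - y \<in> tensor_null phi} = (\<Sum>i<n. fps_map phi (H i) * fps_const (gs i))"
      by (simp add: omega_class[OF ah] of_tmsum[OF ah])
    also have "\<dots> = G"
      by (rule fps_ext) (simp add: fps_sum_nth fm_nth[OF ah] H_def c)
    finally have "G = omega phi {y. ?x - y \<in> tensor_null phi}" by simp
    moreover have "{y. ?x - y \<in> tensor_null phi} \<in> tensor_space phi"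
      unfolding tensor_space_def by (rule rangeI)
    ultimately show "G \<in> omega phi ` tensor_space phi" by (rule image_eqI)
  qed
next
  note ah = assms
  assume hyp: "\<forall>M. fg_submodule phi M \<longrightarrow> (\<exists>N. fp_submodule phi N \<and> M \<subseteq> N)"
  show "inj_on (omega phi) (tensor_space phi)"
  proof (rule inj_onI)
    fix X Y assume X: "X \<in> tensor_space phi" and Y: "Y \<in> tensor_space phi"
      and eq: "omega phi X = omega phi Y"
    from X obtain x where Xx: "X = {z. x - z \<in> tensor_null phi}" unfolding tensor_space_def by blast
    from Y obtain y where Yy: "Y = {z. y - z \<in> tensor_null phi}" unfolding tensor_space_def by blast
    have oxy: "omega_free phi (x - y) = 0"
      using eq by (simp add: Xx Yy omega_class[OF ah] of_diff[OF ah])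
    obtain m :: nat and F s where mFs: "teq phi (x - y) (\<Sum>k<m. tm (F k) (s k))" using decomp by blast
    have "(\<Sum>k<m. fps_map phi (F k) * fps_const (s k)) = 0"
      using oxy of_teq[OF ah mFs] by (simp add: of_tmsum[OF ah])
    then have "(\<Sum>k<m. tm (F k) (s k)) \<in> tensor_null phi" by (rule main_null[OF ah hyp])
    then have xy: "x - y \<in> tensor_null phi"
      using mFs tn_add[of "x - y - (\<Sum>k<m. tm (F k) (s k))" phi "\<Sum>k<m. tm (F k) (s k)"]
      by (simp add: teq_def)
    show "X = Y" unfolding Xx Yy
    proof (rule set_eqI)
      fix z
      have a: "y - z \<in> tensor_null phi" if "x - z \<in> tensor_null phi"
      proof -
        have "(x - z) - (x - y) = y - z" by (simp add: algebra_simps)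
        then show ?thesis using tensor_null.diff[OF that xy] by simp
      qed
      have b: "x - z \<in> tensor_null phi" if "y - z \<in> tensor_null phi"
      proof -
        have "(x - y) + (y - z) = x - z" by (simp add: algebra_simps)
        then show ?thesis using tn_add[OF xy that] by simp
      qed
      show "z \<in> {z. x - z \<in> tensor_null phi} \<longleftrightarrow> z \<in> {z. y - z \<in> tensor_null phi}"
        unfolding mem_Collect_eq using a b by blast
    qed
  qed
qed

end
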